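(* Let $\mathcal{A}$ be a fuzzy automaton and $\Phi=(\varphi_n)_{n\in\mathbb{N}}$ the greatest depth-bounded fuzzy bisimulation between $\mathcal{A}$ and itself. If $\mathcal{L}$ satisfies the join-meet distributivity law, $\otimes$ is continuous and $\mathcal{A}$ is image-finite, then (a) $\bigwedge_n\varphi_n$ is the greatest fuzzy bisimulation between $\mathcal{A}$ and itself; (b) each $\varphi_n$ is a fuzzy equivalence on $A$; (c) $\|\Phi\|^b_{\mathcal{A},\mathcal{A}}=1$.
   Context: $\mathcal{L}=\langle L,\le,\otimes,\Rightarrow,0,1\rangle$ is a complete residuated lattice: $\langle L,\le,0,1\rangle$ is a complete lattice with least element $0$ and greatest element $1$, $\langle L,\otimes,1\rangle$ is a commutative monoid, and $x\otimes y\le z$ iff $x\le (y\Rightarrow z)$. Join-meet distributivity law: $a\vee\bigwedge B=\bigwedge_{b\in B}(a\vee b)$. $\otimes$ continuous: $x\otimes\bigwedge Y=\bigwedge_{y\in Y}(x\otimes y)$. Fuzzy relations are maps into $L$ ordered pointwise; $\varphi^{-1}(b,a)=\varphi(a,b)$; $(\varphi\circ\psi)(a,c)=\bigvee_b\varphi(a,b)\otimes\psi(b,c)$, $(f\circ\varphi)(b)=\bigvee_a f(a)\otimes\varphi(a,b)$, $(\varphi\circ g)(a)=\bigvee_b\varphi(a,b)\otimes g(b)$; $S(g,f)=\bigwedge_a(g(a)\Rightarrow f(a))$. A fuzzy relation $\varphi$ on $A$ is a fuzzy equivalence if $\varphi(a,a)=1$ for all $a$, $\varphi=\varphi^{-1}$,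 and $\varphi\circ\varphi\le\varphi$. A fuzzy automaton over $\Sigma$ is $\mathcal{A}=\langle A,\delta^{\mathcal{A}},\sigma^{\mathcal{A}},\tau^{\mathcal{A}}\rangle$ with $A$ nonempty, $\delta^{\mathcal{A}}:A\times\Sigma\times A\to L$, $\sigma^{\mathcal{A}},\tau^{\mathcal{A}}:A\to L$; $\delta^{\mathcal{A}}_s(x,y)=\delta^{\mathcal{A}}(x,s,y)$. Image-finite: each $\{y\mid\delta^{\mathcal{A}}_s(x,y)>0\}$ finite and $\sigma^{\mathcal{A}}$ has finite support. $\|\varphi\|_{\mathcal{A},\mathcal{A}}=S(\sigma^{\mathcal{A}},\sigma^{\mathcal{A}}\circ\varphi^{-1})$. A fuzzy bisimulation between $\mathcal{A}$ and $\mathcal{A}'$: $\varphi$ with $\varphi^{-1}\circ\tau^{\mathcal{A}}\le\tau^{\mathcal{A}'}$, $\varphi\circ\tau^{\mathcal{A}'}\le\tau^{\mathcal{A}}$, $\varphi^{-1}\circ\delta^{\mathcal{A}}_s\le\delta^{\mathcal{A}'}_s\circ\varphi^{-1}$, $\varphi\circ\delta^{\mathcal{A}'}_s\le\delta^{\mathcal{A}}_s\circ\varphi$ ($s\in\Sigma$). A depth-bounded fuzzy bisimulation is a sequence $(\varphi_n)_{n\in\mathbb{N}}$ with $\varphi_n\le\varphi_{n-1}$ ($n\ge1$), $\varphi_0^{-1}\circ\tau^{\mathcal{A}}\le\tau^{\mathcal{A}'}$, $\varphi_0\circ\tau^{\mathcal{A}'}\le\tau^{\mathcal{A}}$, and $\varphi_n^{-1}\circ\delta^{\mathcal{A}}_s\le\delta^{\mathcal{A}'}_s\circ\varphi_{n-1}^{-1}$,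 $\varphi_n\circ\delta^{\mathcal{A}'}_s\le\delta^{\mathcal{A}}_s\circ\varphi_{n-1}$ ($s\in\Sigma,n\ge1$); its norm is $\|\Phi\|^b=\bigwedge_n\|\varphi_n\|\wedge\bigwedge_n\|\varphi_n^{-1}\|$. Sequences are ordered componentwise. *)

theory Defs
  imports Main
begin

text \<open>Complete residuated lattice on a complete lattice type 'l: 0 = bot, 1 = top,
  tensor t (the monoid operation), residuum r.\<close>

definition complete_residuated_lattice ::
  "('l::complete_lattice \<Rightarrow> 'l \<Rightarrow> 'l) \<Rightarrow> ('l \<Rightarrow> 'l \<Rightarrow> 'l) \<Rightarrow> bool" where
  "complete_residuated_lattice t r \<longleftrightarrow>
     (\<forall>x y z. t (t x y) z = t x (t y z)) \<and>
     (\<forall>x y. t x y = t y x) \<and>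
     (\<forall>x. t x top = x) \<and>
     (\<forall>x y z. t x y \<le> z \<longleftrightarrow> x \<le> r y z)"

definition join_meet_distributive :: "'l::complete_lattice itself \<Rightarrow> bool" where
  "join_meet_distributive _ \<longleftrightarrow> (\<forall>(a::'l) B. sup a (Inf B) = (INF b\<in>B. sup a b))"

text \<open>Continuity of the tensor (for nonempty Y; for Y empty the law would force
  every element to be top).\<close>
definition tensor_continuous :: "('l::complete_lattice \<Rightarrow> 'l \<Rightarrow> 'l) \<Rightarrow> bool" where
  "tensor_continuous t \<longleftrightarrow> (\<forall>x Y. Y \<noteq> {} \<longrightarrow> t x (Inf Y) = (INF y\<in>Y. t x y))"

definition fconv :: "('a \<Rightarrow> 'b \<Rightarrow> 'l) \<Rightarrow> 'b \<Rightarrow> 'a \<Rightarrow> 'l" where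
  "fconv \<phi> = (\<lambda>b a. \<phi> a b)"

definition frel_comp ::
  "('l::complete_lattice \<Rightarrow> 'l \<Rightarrow> 'l) \<Rightarrow> ('a \<Rightarrow> 'b \<Rightarrow> 'l) \<Rightarrow> ('b \<Rightarrow> 'c \<Rightarrow> 'l) \<Rightarrow> 'a \<Rightarrow> 'c \<Rightarrow> 'l" where
  "frel_comp t \<phi> \<psi> = (\<lambda>a c. SUP b. t (\<phi> a b) (\<psi> b c))"

definition fset_rel_comp ::
  "('l::complete_lattice \<Rightarrow> 'l \<Rightarrow> 'l) \<Rightarrow> ('a \<Rightarrow> 'l) \<Rightarrow> ('a \<Rightarrow> 'b \<Rightarrow> 'l) \<Rightarrow> 'b \<Rightarrow> 'l" where
  "fset_rel_comp t f \<phi> = (\<lambda>b. SUP a. t (f a) (\<phi> a b))"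

definition frel_set_comp ::
  "('l::complete_lattice \<Rightarrow> 'l \<Rightarrow> 'l) \<Rightarrow> ('a \<Rightarrow> 'b \<Rightarrow> 'l) \<Rightarrow> ('b \<Rightarrow> 'l) \<Rightarrow> 'a \<Rightarrow> 'l" where
  "frel_set_comp t \<phi> g = (\<lambda>a. SUP b. t (\<phi> a b) (g b))"

definition subsethood ::
  "('l::complete_lattice \<Rightarrow> 'l \<Rightarrow> 'l) \<Rightarrow> ('a \<Rightarrow> 'l) \<Rightarrow> ('a \<Rightarrow> 'l) \<Rightarrow> 'l" where
  "subsethood r g f = (INF a. r (g a) (f a))"

definition fuzzy_equivalence ::
  "('l::complete_lattice \<Rightarrow> 'l \<Rightarrow> 'l) \<Rightarrow> ('a \<Rightarrow> 'a \<Rightarrow> 'l) \<Rightarrow> bool" where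
  "fuzzy_equivalence t \<phi> \<longleftrightarrow>
     (\<forall>a. \<phi> a a = top) \<and> \<phi> = fconv \<phi> \<and> frel_comp t \<phi> \<phi> \<le> \<phi>"

text \<open>Fuzzy automata: states of type 'a (nonempty by HOL typing), alphabet = UNIV of type 's;
  an automaton is given by its transition function delta, initial sigma, final tau.\<close>

definition image_finite ::
  "('a \<Rightarrow> 's \<Rightarrow> 'a \<Rightarrow> 'l::complete_lattice) \<Rightarrow> ('a \<Rightarrow> 'l) \<Rightarrow> bool" where
  "image_finite \<delta> \<sigma> \<longleftrightarrow>
     (\<forall>x s. finite {y. bot < \<delta> x s y}) \<and> finite {x. bot < \<sigma> x}"

definition fnorm ::
  "('l::complete_lattice \<Rightarrow> 'l \<Rightarrow> 'l) \<Rightarrow> ('l \<Rightarrow> 'l \<Rightarrow> 'l) \<Rightarrow> ('a \<Rightarrow> 'l) \<Rightarrow> ('b \<Rightarrow> 'l)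
     \<Rightarrow> ('a \<Rightarrow> 'b \<Rightarrow> 'l) \<Rightarrow> 'l" where
  "fnorm t r \<sigma> \<sigma>' \<phi> = subsethood r \<sigma> (fset_rel_comp t \<sigma>' (fconv \<phi>))"

definition fuzzy_bisimulation ::
  "('l::complete_lattice \<Rightarrow> 'l \<Rightarrow> 'l)
   \<Rightarrow> ('a \<Rightarrow> 's \<Rightarrow> 'a \<Rightarrow> 'l) \<Rightarrow> ('a \<Rightarrow> 'l)
   \<Rightarrow> ('b \<Rightarrow> 's \<Rightarrow> 'b \<Rightarrow> 'l) \<Rightarrow> ('b \<Rightarrow> 'l)
   \<Rightarrow> ('a \<Rightarrow> 'b \<Rightarrow> 'l) \<Rightarrow> bool" where
  "fuzzy_bisimulation t \<delta> \<tau> \<delta>' \<tau>' \<phi> \<longleftrightarrow>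
     frel_set_comp t (fconv \<phi>) \<tau> \<le> \<tau>' \<and>
     frel_set_comp t \<phi> \<tau>' \<le> \<tau> \<and>
     (\<forall>s. frel_comp t (fconv \<phi>) (\<lambda>x y. \<delta> x s y) \<le> frel_comp t (\<lambda>x y. \<delta>' x s y) (fconv \<phi>)) \<and>
     (\<forall>s. frel_comp t \<phi> (\<lambda>x y. \<delta>' x s y) \<le> frel_comp t (\<lambda>x y. \<delta> x s y) \<phi>)"

definition depth_bounded_fuzzy_bisimulation ::
  "('l::complete_lattice \<Rightarrow> 'l \<Rightarrow> 'l)
   \<Rightarrow> ('a \<Rightarrow> 's \<Rightarrow> 'a \<Rightarrow> 'l) \<Rightarrow> ('a \<Rightarrow> 'l)
   \<Rightarrow> ('b \<Rightarrow> 's \<Rightarrow> 'b \<Rightarrow> 'l) \<Rightarrow> ('b \<Rightarrow> 'l)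
   \<Rightarrow> (nat \<Rightarrow> 'a \<Rightarrow> 'b \<Rightarrow> 'l) \<Rightarrow> bool" where
  "depth_bounded_fuzzy_bisimulation t \<delta> \<tau> \<delta>' \<tau>' \<Phi> \<longleftrightarrow>
     (\<forall>n\<ge>1. \<Phi> n \<le> \<Phi> (n - 1)) \<and>
     frel_set_comp t (fconv (\<Phi> 0)) \<tau> \<le> \<tau>' \<and>
     frel_set_comp t (\<Phi> 0) \<tau>' \<le> \<tau> \<and>
     (\<forall>s. \<forall>n\<ge>1. frel_comp t (fconv (\<Phi> n)) (\<lambda>x y. \<delta> x s y)
                  \<le> frel_comp t (\<lambda>x y. \<delta>' x s y) (fconv (\<Phi> (n - 1)))) \<and>
     (\<forall>s. \<forall>n\<ge>1. frel_comp t (\<Phi> n) (\<lambda>x y. \<delta>' x s y)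
                  \<le> frel_comp t (\<lambda>x y. \<delta> x s y) (\<Phi> (n - 1)))"

definition depth_bounded_norm ::
  "('l::complete_lattice \<Rightarrow> 'l \<Rightarrow> 'l) \<Rightarrow> ('l \<Rightarrow> 'l \<Rightarrow> 'l) \<Rightarrow> ('a \<Rightarrow> 'l) \<Rightarrow> ('b \<Rightarrow> 'l)
     \<Rightarrow> (nat \<Rightarrow> 'a \<Rightarrow> 'b \<Rightarrow> 'l) \<Rightarrow> 'l" where
  "depth_bounded_norm t r \<sigma> \<sigma>' \<Phi> =
     inf (INF n. fnorm t r \<sigma> \<sigma>' (\<Phi> n)) (INF n. fnorm t r \<sigma>' \<sigma> (fconv (\<Phi> n)))"

end

theory Submission
  imports Defs
begin

locale crl =
  fixes t :: "'l::complete_lattice \<Rightarrow> 'l \<Rightarrow> 'l" and r :: "'l \<Rightarrow> 'l \<Rightarrow> 'l"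
  assumes crl: "complete_residuated_lattice t r"
begin

lemma assoc: "t (t x y) z = t x (t y z)"
  using crl unfolding complete_residuated_lattice_def by (elim conjE allE)
lemma comm: "t x y = t y x"
  using crl unfolding complete_residuated_lattice_def by (elim conjE allE)
lemma top_r: "t x top = x"
  using crl unfolding complete_residuated_lattice_def by (elim conjE allE)
lemma top_l: "t top x = x"
  by (subst comm) (rule top_r)
lemma adj: "t x y \<le> z \<longleftrightarrow> x \<le> r y z"
  using crl unfolding complete_residuated_lattice_def by (elim conjE allE)

lemma mono1: "x \<le> x' \<Longrightarrow> t x y \<le> t x' y"
proof -
  assume a: "x \<le> x'"
  have "x' \<le> r y (t x' y)" by (rule adj[THEN iffD1]) (rule order_refl)
  with a have "x \<le> r y (t x' y)" by (rule order_trans)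
  then show ?thesis by (rule adj[THEN iffD2])
qed

lemma mono: "x \<le> x' \<Longrightarrow> y \<le> y' \<Longrightarrow> t x y \<le> t x' y'"
proof -
  assume a: "x \<le> x'" and b: "y \<le> y'"
  have "t x y \<le> t x' y" using a by (rule mono1)
  also have "t x' y = t y x'" by (rule comm)
  also have "\<dots> \<le> t y' x'" using b by (rule mono1)
  also have "\<dots> = t x' y'" by (rule comm)
  finally show ?thesis .
qed

lemma Sup_left: "t (SUP i\<in>I. f i) y = (SUP i\<in>I. t (f i) y)"
proof (rule antisym)
  have "(SUP i\<in>I. f i) \<le> r y (SUP i\<in>I. t (f i) y)"
  proof (rule SUP_least)
    fix i assume "i \<in> I"
    then have "t (f i) y \<le> (SUP i\<in>I. t (f i) y)" by (rule SUP_upper)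
    then show "f i \<le> r y (SUP i\<in>I. t (f i) y)" by (rule adj[THEN iffD1])
  qed
  then show "t (SUP i\<in>I. f i) y \<le> (SUP i\<in>I. t (f i) y)" by (rule adj[THEN iffD2])
  show "(SUP i\<in>I. t (f i) y) \<le> t (SUP i\<in>I. f i) y"
    by (rule SUP_least) (rule mono1, rule SUP_upper)
qed

lemma Sup_right: "t x (SUP i\<in>I. f i) = (SUP i\<in>I. t x (f i))"
  by (simp only: comm[of x] Sup_left)

lemma bot_l: "t bot y = bot"
proof -
  have "bot \<le> r y bot" by (rule bot_least)
  then have "t bot y \<le> bot" by (rule adj[THEN iffD2])
  then show ?thesis by (rule bot.extremum_uniqueI)
qed
lemma bot_r: "t y bot = bot"
  by (subst comm) (rule bot_l)

lemma comp_assoc: "frel_comp t (frel_comp t \<phi> \<psi>) \<chi> = frel_comp t \<phi> (frel_comp t \<psi> \<chi>)"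
proof (intro ext)
  fix a c
  have "frel_comp t (frel_comp t \<phi> \<psi>) \<chi> a c = (SUP b. SUP d. t (t (\<phi> a d) (\<psi> d b)) (\<chi> b c))"
    unfolding frel_comp_def by (simp add: Sup_left)
  also have "\<dots> = (SUP d. SUP b. t (t (\<phi> a d) (\<psi> d b)) (\<chi> b c))" by (rule SUP_commute)
  also have "\<dots> = frel_comp t \<phi> (frel_comp t \<psi> \<chi>) a c"
    unfolding frel_comp_def by (simp add: Sup_right assoc)
  finally show "frel_comp t (frel_comp t \<phi> \<psi>) \<chi> a c = frel_comp t \<phi> (frel_comp t \<psi> \<chi>) a c" .
qed

lemma setcomp_assoc: "frel_set_comp t (frel_comp t \<phi> \<psi>) g = frel_set_comp t \<phi> (frel_set_comp t \<psi> g)"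
proof (intro ext)
  fix a
  have "frel_set_comp t (frel_comp t \<phi> \<psi>) g a = (SUP b. SUP d. t (t (\<phi> a d) (\<psi> d b)) (g b))"
    unfolding frel_comp_def frel_set_comp_def by (simp add: Sup_left)
  also have "\<dots> = (SUP d. SUP b. t (t (\<phi> a d) (\<psi> d b)) (g b))" by (rule SUP_commute)
  also have "\<dots> = frel_set_comp t \<phi> (frel_set_comp t \<psi> g) a"
    unfolding frel_set_comp_def by (simp add: Sup_right assoc)
  finally show "frel_set_comp t (frel_comp t \<phi> \<psi>) g a = frel_set_comp t \<phi> (frel_set_comp t \<psi> g) a" .
qed

lemma conv_comp: "fconv (frel_comp t \<phi> \<psi>) = frel_comp t (fconv \<psi>) (fconv \<phi>)"
  unfolding fconv_def frel_comp_def by (simp add: comm)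

lemma comp_mono: "\<phi> \<le> \<phi>' \<Longrightarrow> \<psi> \<le> \<psi>' \<Longrightarrow> frel_comp t \<phi> \<psi> \<le> frel_comp t \<phi>' \<psi>'"
  unfolding frel_comp_def le_fun_def by (auto intro!: SUP_mono' mono)

lemma setcomp_mono: "\<phi> \<le> \<phi>' \<Longrightarrow> g \<le> g' \<Longrightarrow> frel_set_comp t \<phi> g \<le> frel_set_comp t \<phi>' g'"
  unfolding frel_set_comp_def le_fun_def by (auto intro!: SUP_mono' mono)

definition Idr :: "'a \<Rightarrow> 'a \<Rightarrow> 'l" where "Idr = (\<lambda>a b. if a = b then top else bot)"

lemma sup_single: "(SUP b. if a = b then x else (bot::'l)) = x"
  by (rule antisym) (auto intro!: SUP_least intro: SUP_upper2[where i=a])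

lemma Id_comp: "frel_comp t Idr \<phi> = \<phi>"
  unfolding frel_comp_def Idr_def
  by (intro ext) (simp add: if_distrib[of "\<lambda>x. t x y" for y] top_l bot_l sup_single cong: if_cong)

lemma comp_Id: "frel_comp t \<phi> Idr = \<phi>"
  unfolding frel_comp_def Idr_def
  by (intro ext) (simp add: if_distrib[of "\<lambda>y. t x y" for x] top_r bot_r eq_commute[of _ b for b] sup_single cong: if_cong)

lemma setcomp_Id: "frel_set_comp t Idr g = g"
  unfolding frel_set_comp_def Idr_def
  by (intro ext) (simp add: if_distrib[of "\<lambda>x. t x y" for y] top_l bot_l sup_single cong: if_cong)

lemma conv_Id: "fconv Idr = Idr"
  unfolding fconv_def Idr_def by (intro ext) auto

lemma sup_restrict:
  assumes "\<And>d. d \<notin> D \<Longrightarrow> F d = (bot::'l)"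
  shows "(SUP d. F d) = (SUP d\<in>D. F d)"
proof (rule antisym)
  show "(SUP d. F d) \<le> (SUP d\<in>D. F d)"
  proof (rule SUP_least)
    fix d show "F d \<le> (SUP d\<in>D. F d)"
      by (cases "d \<in> D") (auto intro: SUP_upper simp: assms)
  qed
  show "(SUP d\<in>D. F d) \<le> (SUP d. F d)" by (rule SUP_subset_mono) auto
qed

end

lemma two_chain:
  fixes h g :: "nat \<Rightarrow> 'l::complete_lattice"
  assumes jmd: "join_meet_distributive TYPE('l)"
    and h: "\<And>n. h (Suc n) \<le> h n" and g: "\<And>n. g (Suc n) \<le> g n"
  shows "(INF n. sup (h n) (g n)) \<le> sup (INF n. h n) (INF m. g m)"
proof -
  have jm: "\<And>(a::'l) B. sup a (Inf B) = (INF b\<in>B. sup a b)"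
    using jmd unfolding join_meet_distributive_def by (rule allE) (erule allE)
  have core: "(INF k. sup (h k) (g k)) \<le> sup (g m) (h n)" for m n
  proof -
    have "(INF k. sup (h k) (g k)) \<le> sup (h (max n m)) (g (max n m))" by (rule INF_lower) (rule UNIV_I)
    also have "\<dots> \<le> sup (h n) (g m)"
    proof (rule sup_mono)
      show "h (max n m) \<le> h n" by (rule lift_Suc_antimono_le[of h, OF h]) (rule max.cobounded1)
      show "g (max n m) \<le> g m" by (rule lift_Suc_antimono_le[of g, OF g]) (rule max.cobounded2)
    qed
    also have "\<dots> = sup (g m) (h n)" by (rule sup_commute)
    finally show ?thesis .
  qed
  have "(INF k. sup (h k) (g k)) \<le> sup (INF n. h n) (g m)" for m
  proof -
    have "(INF k. sup (h k) (g k)) \<le> (INF n. sup (g m) (h n))" by (rule INF_greatest) (rule core)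
    also have "(INF n. sup (g m) (h n)) = sup (g m) (INF n. h n)"
      using jm[of "g m" "range h"] by (simp only: image_image)
    also have "\<dots> = sup (INF n. h n) (g m)" by (rule sup_commute)
    finally show ?thesis .
  qed
  then have "(INF k. sup (h k) (g k)) \<le> (INF m. sup (INF n. h n) (g m))" by (rule INF_greatest)
  also have "(INF m. sup (INF n. h n) (g m)) = sup (INF n. h n) (INF m. g m)"
    using jm[of "INF n. h n" "range g"] by (simp only: image_image)
  finally show ?thesis .
qed

lemma fin_chain:
  fixes f :: "'x \<Rightarrow> nat \<Rightarrow> 'l::complete_lattice"
  assumes jmd: "join_meet_distributive TYPE('l)" and fin: "finite D"
    and dec: "\<And>d n. f d (Suc n) \<le> f d n"
  shows "(INF n. SUP d\<in>D. f d n) \<le> (SUP d\<in>D. INF n. f d n)"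
  using fin
proof (induction D rule: finite_induct)
  case empty
  then show ?case by simp
next
  case (insert x F)
  have "(INF n. SUP d\<in>insert x F. f d n) = (INF n. sup (f x n) (SUP d\<in>F. f d n))" by simp
  also have "\<dots> \<le> sup (INF n. f x n) (INF n. SUP d\<in>F. f d n)"
    by (rule two_chain[OF jmd]) (rule dec, rule SUP_mono', rule dec)
  also have "\<dots> \<le> sup (INF n. f x n) (SUP d\<in>F. INF n. f d n)"
    using insert.IH by (rule sup_mono[OF order_refl])
  also have "\<dots> = (SUP d\<in>insert x F. INF n. f d n)" by simp
  finally show ?case .
qed

context crl begin

lemma key:
  assumes jmd: "join_meet_distributive TYPE('l)" and tc: "tensor_continuous t"
    and fin: "finite {d. bot < da d}"
    and X: "\<And>m. X \<le> (SUP d. t (da d) (g m d))"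
    and dec: "\<And>m d. g (Suc m) d \<le> g m d"
  shows "X \<le> (SUP d. t (da d) (INF m. g m d))"
proof -
  let ?D = "{d. bot < da d}"
  have z: "da d = bot" if "d \<notin> ?D" for d
  proof -
    have "\<not> bot < da d" using that by simp
    show ?thesis
    proof (rule ccontr)
      assume "da d \<noteq> bot"
      then have "bot < da d" by (rule bot.not_eq_extremum[THEN iffD1])
      with \<open>\<not> bot < da d\<close> show False by (rule notE)
    qed
  qed
  have z2: "t (da d) y = bot" if "d \<notin> ?D" for d y
    by (simp only: z[OF that] bot_l)
  have "X \<le> (INF m. SUP d\<in>?D. t (da d) (g m d))"
  proof (rule INF_greatest)
    fix m
    have "(SUP d. t (da d) (g m d)) = (SUP d\<in>?D. t (da d) (g m d))"
      by (rule sup_restrict) (rule z2)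
    then show "X \<le> (SUP d\<in>?D. t (da d) (g m d))" using X[of m] by (simp only:)
  qed
  also have "\<dots> \<le> (SUP d\<in>?D. INF m. t (da d) (g m d))"
    by (rule fin_chain[OF jmd fin]) (rule mono[OF order_refl dec])
  also have "\<dots> = (SUP d\<in>?D. t (da d) (INF m. g m d))"
  proof (rule SUP_cong[OF refl])
    fix d
    have "t (da d) (Inf (range (\<lambda>m. g m d))) = (INF y\<in>range (\<lambda>m. g m d). t (da d) y)"
    proof -
      have "\<forall>x Y. Y \<noteq> {} \<longrightarrow> t x (Inf Y) = (INF y\<in>Y. t x y)"
        using tc unfolding tensor_continuous_def .
      moreover have "range (\<lambda>m. g m d) \<noteq> {}" by simp
      ultimately show ?thesis by (elim allE impE)
    qed
    then show "(INF m. t (da d) (g m d)) = t (da d) (INF m. g m d)" by (simp only: image_image)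
  qed
  also have "\<dots> = (SUP d. t (da d) (INF m. g m d))"
    by (rule sup_restrict[symmetric]) (rule z2)
  finally show ?thesis .
qed

end

lemma conv_conv[simp]: "fconv (fconv \<phi>) = \<phi>" unfolding fconv_def by simp
lemma conv_mono: "\<phi> \<le> \<psi> \<Longrightarrow> fconv \<phi> \<le> fconv \<psi>" unfolding fconv_def le_fun_def by simp

context crl begin

lemma trans_step:
  assumes "frel_comp t A D \<le> frel_comp t D B"
  shows "frel_comp t (frel_comp t A A) D \<le> frel_comp t D (frel_comp t B B)"
proof -
  have "frel_comp t (frel_comp t A A) D = frel_comp t A (frel_comp t A D)" by (rule comp_assoc)
  also have "\<dots> \<le> frel_comp t A (frel_comp t D B)" by (rule comp_mono[OF order_refl assms])
  also have "\<dots> = frel_comp t (frel_comp t A D) B" by (rule comp_assoc[symmetric])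
  also have "\<dots> \<le> frel_comp t (frel_comp t D B) B" by (rule comp_mono[OF assms order_refl])
  also have "\<dots> = frel_comp t D (frel_comp t B B)" by (rule comp_assoc)
  finally show ?thesis .
qed

lemma trans_tau:
  assumes "frel_set_comp t A g \<le> g"
  shows "frel_set_comp t (frel_comp t A A) g \<le> g"
proof -
  have "frel_set_comp t (frel_comp t A A) g = frel_set_comp t A (frel_set_comp t A g)" by (rule setcomp_assoc)
  also have "\<dots> \<le> frel_set_comp t A g" by (rule setcomp_mono[OF order_refl assms])
  finally show ?thesis using assms by (rule order_trans)
qed

lemma norm_top:
  assumes "\<And>a. P a a = top"
  shows "fnorm t r \<sigma> \<sigma> P = top"
  unfolding fnorm_def subsethood_def fset_rel_comp_def fconv_def
proof (rule INF_eq_const[OF UNIV_not_empty])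
  fix a
  have "t (\<sigma> a) (P a a) \<le> (SUP b. t (\<sigma> b) (P a b))"
    by (rule SUP_upper) (rule UNIV_I)
  then have "t top (\<sigma> a) \<le> (SUP b. t (\<sigma> b) (P a b))"
    by (simp only: assms top_l top_r)
  then have "top \<le> r (\<sigma> a) (SUP b. t (\<sigma> b) (P a b))" by (rule adj[THEN iffD1])
  then show "r (\<sigma> a) (SUP b. t (\<sigma> b) (P a b)) = top" by (simp add: top_unique)
qed

end

theorem mainTheorem13:
  fixes t r :: "'l::complete_lattice \<Rightarrow> 'l \<Rightarrow> 'l"
    and \<delta> :: "'a \<Rightarrow> 's \<Rightarrow> 'a \<Rightarrow> 'l" and \<sigma> \<tau> :: "'a \<Rightarrow> 'l"
    and \<Phi> :: "nat \<Rightarrow> 'a \<Rightarrow> 'a \<Rightarrow> 'l"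
  assumes "complete_residuated_lattice t r"
    and "join_meet_distributive TYPE('l)"
    and "tensor_continuous t"
    and "image_finite \<delta> \<sigma>"
    and "depth_bounded_fuzzy_bisimulation t \<delta> \<tau> \<delta> \<tau> \<Phi>"
    and "\<forall>\<Psi>. depth_bounded_fuzzy_bisimulation t \<delta> \<tau> \<delta> \<tau> \<Psi> \<longrightarrow> \<Psi> \<le> \<Phi>"
  shows "fuzzy_bisimulation t \<delta> \<tau> \<delta> \<tau> (INF n. \<Phi> n)
       \<and> (\<forall>\<psi>. fuzzy_bisimulation t \<delta> \<tau> \<delta> \<tau> \<psi> \<longrightarrow> \<psi> \<le> (INF n. \<Phi> n))
       \<and> (\<forall>n. fuzzy_equivalence t (\<Phi> n))
       \<and> depth_bounded_norm t r \<sigma> \<sigma> \<Phi> = top"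
proof -
  interpret crl t r by (rule crl.intro) (fact assms(1))
  let ?DB = "depth_bounded_fuzzy_bisimulation t \<delta> \<tau> \<delta> \<tau>"
  have DB: "?DB \<Phi>" by fact
  have le: "\<Psi> n \<le> \<Phi> n" if "?DB \<Psi>" for \<Psi> n
  proof -
    have "\<Psi> \<le> \<Phi>" using assms(6)[rule_format, OF that] .
    then show ?thesis by (rule le_funD)
  qed
  note DBu = DB[unfolded depth_bounded_fuzzy_bisimulation_def]
  have all1: "\<forall>n\<ge>1. \<Phi> n \<le> \<Phi> (n - 1)" using DBu by (rule conjunct1)
  have tau1: "frel_set_comp t (fconv (\<Phi> 0)) \<tau> \<le> \<tau>" using DBu[THEN conjunct2] by (rule conjunct1)
  have tau2: "frel_set_comp t (\<Phi> 0) \<tau> \<le> \<tau>" using DBu[THEN conjunct2, THEN conjunct2] by (rule conjunct1)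
  have all3: "\<forall>s. \<forall>n\<ge>1. frel_comp t (fconv (\<Phi> n)) (\<lambda>x y. \<delta> x s y)
                  \<le> frel_comp t (\<lambda>x y. \<delta> x s y) (fconv (\<Phi> (n - 1)))"
    using DBu[THEN conjunct2, THEN conjunct2, THEN conjunct2] by (rule conjunct1)
  have all4: "\<forall>s. \<forall>n\<ge>1. frel_comp t (\<Phi> n) (\<lambda>x y. \<delta> x s y)
                  \<le> frel_comp t (\<lambda>x y. \<delta> x s y) (\<Phi> (n - 1))"
    using DBu[THEN conjunct2, THEN conjunct2, THEN conjunct2] by (rule conjunct2)
  have dec: "\<Phi> (Suc n) \<le> \<Phi> n" for n using all1[rule_format, of "Suc n"] by simp
  have d1: "frel_comp t (fconv (\<Phi> (Suc n))) (\<lambda>x y. \<delta> x s y)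
                  \<le> frel_comp t (\<lambda>x y. \<delta> x s y) (fconv (\<Phi> n))" for s n
    using all3[THEN spec[of _ s], THEN spec[of _ "Suc n"]] by simp
  have d2: "frel_comp t (\<Phi> (Suc n)) (\<lambda>x y. \<delta> x s y)
                  \<le> frel_comp t (\<lambda>x y. \<delta> x s y) (\<Phi> n)" for s n
    using all4[THEN spec[of _ s], THEN spec[of _ "Suc n"]] by simp
  have fin: "finite {d. bot < \<delta> a s d}" for a s
  proof -
    have "\<forall>x s. finite {y. bot < \<delta> x s y}" using assms(4) unfolding image_finite_def by (rule conjunct1)
    then show ?thesis by (elim allE)
  qed

  have "?DB (\<lambda>n. Idr)"
    unfolding depth_bounded_fuzzy_bisimulation_def
    by (simp add: conv_Id setcomp_Id Id_comp comp_Id)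
  then have refl: "\<Phi> n a a = top" for n a
  proof -
    assume h: "?DB (\<lambda>n. Idr)"
    have "Idr a a \<le> \<Phi> n a a" using le_funD[OF le_funD[OF le[OF h, of n]]] .
    then have "top \<le> \<Phi> n a a" by (simp add: Idr_def)
    then show ?thesis by (rule top_unique[THEN iffD1])
  qed
  have "?DB (\<lambda>n. fconv (\<Phi> n))"
    unfolding depth_bounded_fuzzy_bisimulation_def
    using all1 tau1 tau2 all3 all4 by (simp only: conv_conv conv_mono) (blast intro: conv_mono)
  then have cle: "fconv (\<Phi> n) \<le> \<Phi> n" for n by (rule le)
  have sym: "\<Phi> n = fconv (\<Phi> n)" for n
  proof (intro ext)
    fix a b
    show "\<Phi> n a b = fconv (\<Phi> n) a b"
      using le_funD[OF le_funD[OF cle[of n]], of a b] le_funD[OF le_funD[OF cle[of n]], of b a]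
      unfolding fconv_def by (simp add: antisym)
  qed
  have "?DB (\<lambda>n. frel_comp t (\<Phi> n) (\<Phi> n))"
    unfolding depth_bounded_fuzzy_bisimulation_def conv_comp
  proof (intro conjI allI impI)
    fix n :: nat assume "1 \<le> n"
    then show "frel_comp t (\<Phi> n) (\<Phi> n) \<le> frel_comp t (\<Phi> (n - 1)) (\<Phi> (n - 1))"
      using all1 by (intro comp_mono) auto
  next
    show "frel_set_comp t (frel_comp t (fconv (\<Phi> 0)) (fconv (\<Phi> 0))) \<tau> \<le> \<tau>"
      by (rule trans_tau[OF tau1])
    show "frel_set_comp t (frel_comp t (\<Phi> 0) (\<Phi> 0)) \<tau> \<le> \<tau>"
      by (rule trans_tau[OF tau2])
  next
    fix s and n :: nat assume "1 \<le> n"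
    show "frel_comp t (frel_comp t (fconv (\<Phi> n)) (fconv (\<Phi> n))) (\<lambda>x y. \<delta> x s y)
       \<le> frel_comp t (\<lambda>x y. \<delta> x s y) (frel_comp t (fconv (\<Phi> (n - 1))) (fconv (\<Phi> (n - 1))))"
      by (rule trans_step) (rule all3[rule_format, OF \<open>1 \<le> n\<close>])
  next
    fix s and n :: nat assume "1 \<le> n"
    show "frel_comp t (frel_comp t (\<Phi> n) (\<Phi> n)) (\<lambda>x y. \<delta> x s y)
       \<le> frel_comp t (\<lambda>x y. \<delta> x s y) (frel_comp t (\<Phi> (n - 1)) (\<Phi> (n - 1)))"
      by (rule trans_step) (rule all4[rule_format, OF \<open>1 \<le> n\<close>])
  qed
  then have trans: "frel_comp t (\<Phi> n) (\<Phi> n) \<le> \<Phi> n" for n by (rule le)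

  have equiv: "\<forall>n. fuzzy_equivalence t (\<Phi> n)"
    unfolding fuzzy_equivalence_def
  proof (intro allI conjI)
    fix n a show "\<Phi> n a a = top" by (rule refl)
  next
    fix n show "\<Phi> n = fconv (\<Phi> n)" by (rule sym)
    show "frel_comp t (\<Phi> n) (\<Phi> n) \<le> \<Phi> n" by (rule trans)
  qed

  have norm: "depth_bounded_norm t r \<sigma> \<sigma> \<Phi> = top"
    unfolding depth_bounded_norm_def
    by (simp add: norm_top refl fconv_def)

  have greatest: "\<forall>\<psi>. fuzzy_bisimulation t \<delta> \<tau> \<delta> \<tau> \<psi> \<longrightarrow> \<psi> \<le> (INF n. \<Phi> n)"
  proof (intro allI impI)
    fix \<psi> assume "fuzzy_bisimulation t \<delta> \<tau> \<delta> \<tau> \<psi>"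
    then have "?DB (\<lambda>n. \<psi>)"
      unfolding depth_bounded_fuzzy_bisimulation_def fuzzy_bisimulation_def by simp
    then show "\<psi> \<le> (INF n. \<Phi> n)" by (intro INF_greatest) (rule le)
  qed

  have low: "(INF n. \<Phi> n) \<le> \<Phi> 0" by (rule INF_lower) simp
  have bis: "fuzzy_bisimulation t \<delta> \<tau> \<delta> \<tau> (INF n. \<Phi> n)"
    unfolding fuzzy_bisimulation_def
  proof (intro conjI allI)
    show "frel_set_comp t (fconv (INF n. \<Phi> n)) \<tau> \<le> \<tau>"
      by (rule order_trans[OF setcomp_mono[OF conv_mono[OF low] order_refl] tau1])
    show "frel_set_comp t (INF n. \<Phi> n) \<tau> \<le> \<tau>"
      by (rule order_trans[OF setcomp_mono[OF low order_refl] tau2])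
  next
    fix s
    show "frel_comp t (fconv (INF n. \<Phi> n)) (\<lambda>x y. \<delta> x s y) \<le> frel_comp t (\<lambda>x y. \<delta> x s y) (fconv (INF n. \<Phi> n))"
    proof (intro le_funI)
      fix a c
      show "frel_comp t (fconv (INF n. \<Phi> n)) (\<lambda>x y. \<delta> x s y) a c \<le> frel_comp t (\<lambda>x y. \<delta> x s y) (fconv (INF n. \<Phi> n)) a c"
        unfolding frel_comp_def fconv_def
      proof (simp only: INF_apply, rule SUP_least)
        fix b
        have "t (INF n. \<Phi> n b a) (\<delta> b s c) \<le> (SUP d. t (\<delta> a s d) (INF m. \<Phi> m c d))"
        proof (rule key[OF assms(2) assms(3) fin])
          fix m
          have "t (INF n. \<Phi> n b a) (\<delta> b s c) \<le> t (\<Phi> (Suc m) b a) (\<delta> b s c)"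
            by (rule mono1) (rule INF_lower, simp)
          also have "\<dots> \<le> frel_comp t (fconv (\<Phi> (Suc m))) (\<lambda>x y. \<delta> x s y) a c"
            unfolding frel_comp_def fconv_def by (rule SUP_upper) simp
          also have "\<dots> \<le> frel_comp t (\<lambda>x y. \<delta> x s y) (fconv (\<Phi> m)) a c"
            using d1 by (simp add: le_fun_def)
          also have "\<dots> = (SUP d. t (\<delta> a s d) (\<Phi> m c d))"
            unfolding frel_comp_def fconv_def by simp
          finally show "t (INF n. \<Phi> n b a) (\<delta> b s c) \<le> (SUP d. t (\<delta> a s d) (\<Phi> m c d))" .
        next
          fix m d show "\<Phi> (Suc m) c d \<le> \<Phi> m c d" using dec by (simp add: le_fun_def)
        qed
        then show "t (INF n. \<Phi> n b a) (\<delta> b s c) \<le> (SUP d. t (\<delta> a s d) (INF n. \<Phi> n c d))"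
          by simp
      qed
    qed
    show "frel_comp t (INF n. \<Phi> n) (\<lambda>x y. \<delta> x s y) \<le> frel_comp t (\<lambda>x y. \<delta> x s y) (INF n. \<Phi> n)"
    proof (intro le_funI)
      fix a c
      show "frel_comp t (INF n. \<Phi> n) (\<lambda>x y. \<delta> x s y) a c \<le> frel_comp t (\<lambda>x y. \<delta> x s y) (INF n. \<Phi> n) a c"
        unfolding frel_comp_def
      proof (simp only: INF_apply, rule SUP_least)
        fix b
        have "t (INF n. \<Phi> n a b) (\<delta> b s c) \<le> (SUP d. t (\<delta> a s d) (INF m. \<Phi> m d c))"
        proof (rule key[OF assms(2) assms(3) fin])
          fix m
          have "t (INF n. \<Phi> n a b) (\<delta> b s c) \<le> t (\<Phi> (Suc m) a b) (\<delta> b s c)"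
            by (rule mono1) (rule INF_lower, simp)
          also have "\<dots> \<le> frel_comp t (\<Phi> (Suc m)) (\<lambda>x y. \<delta> x s y) a c"
            unfolding frel_comp_def by (rule SUP_upper) simp
          also have "\<dots> \<le> frel_comp t (\<lambda>x y. \<delta> x s y) (\<Phi> m) a c"
            using d2 by (simp add: le_fun_def)
          also have "\<dots> = (SUP d. t (\<delta> a s d) (\<Phi> m d c))"
            unfolding frel_comp_def by simp
          finally show "t (INF n. \<Phi> n a b) (\<delta> b s c) \<le> (SUP d. t (\<delta> a s d) (\<Phi> m d c))" .
        next
          fix m d show "\<Phi> (Suc m) d c \<le> \<Phi> m d c" using dec by (simp add: le_fun_def)
        qed
        then show "t (INF n. \<Phi> n a b) (\<delta> b s c) \<le> (SUP d. t (\<delta> a s d) (INF n. \<Phi> n d c))"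
          by simp
      qed
    qed
  qed
  show ?thesis by (rule conjI[OF bis conjI[OF greatest conjI[OF equiv norm]]])
qed

end
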